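(* $\mathfrak{ss}_n=3$.
   Context: Let $\mathfrak S_{cc}$ be the set of all sequences $\mathbf a=\langle a_i:i\in\omega\rangle$ of rational numbers with $a_i\to0$ such that $\sum_i a_i$ is conditionally convergent, i.e. converges to a real number and is conditional. A series $\sum\mathbf b$ is conditional if the sum of its positive terms is $+\infty$ and the sum of its negative terms is $-\infty$. Let $[\omega]^\omega_\omega$ be the set of infinite coinfinite subsets of $\omega$; for such $X$ with increasing enumeration $\langle i_n\rangle$, $\sum_X\mathbf a$ denotes $\sum_n a_{i_n}$. $\mathfrak{ss}_n$ is the least cardinality of a family $\mathcal X\subseteq[\omega]^\omega_\omega$ such that for every $\mathbf a\in\mathfrak S_{cc}$ there is $X\in\mathcal X$ with $\sum_X\mathbf a$ conditional. *)

theory Defs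
  imports "HOL-Analysis.Analysis" "HOL-Library.Infinite_Set"
begin

definition conditional_series :: "(nat \<Rightarrow> real) \<Rightarrow> bool" where
  "conditional_series b \<longleftrightarrow>
     filterlim (\<lambda>N. \<Sum>n<N. max (b n) 0) at_top sequentially \<and>
     filterlim (\<lambda>N. \<Sum>n<N. min (b n) 0) at_bot sequentially"

definition S_cc :: "(nat \<Rightarrow> rat) set" where
  "S_cc = {a. (\<lambda>n. real_of_rat (a n)) \<longlonglongrightarrow> 0 \<and>
              summable (\<lambda>n. real_of_rat (a n)) \<and>
              conditional_series (\<lambda>n. real_of_rat (a n))}"

definition inf_coinf :: "nat set set" where
  "inf_coinf = {X. infinite X \<and> infinite (UNIV - X)}"

definition subseries :: "nat set \<Rightarrow> (nat \<Rightarrow> rat) \<Rightarrow> nat \<Rightarrow> real" where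
  "subseries X a n = real_of_rat (a (Infinite_Set.enumerate X n))"

definition ss_n_family :: "nat set set \<Rightarrow> bool" where
  "ss_n_family F \<longleftrightarrow> F \<subseteq> inf_coinf \<and>
     (\<forall>a\<in>S_cc. \<exists>X\<in>F. conditional_series (subseries X a))"

end

theory Submission
  imports Defs
begin

lemma L_top:
  fixes f :: "nat \<Rightarrow> real"
  assumes nn: "\<And>n. 0 \<le> f n"
  shows "filterlim (\<lambda>N. \<Sum>n<N. f n) at_top sequentially \<longleftrightarrow> \<not> summable f"
proof
  assume lim: "filterlim (\<lambda>N. \<Sum>n<N. f n) at_top sequentially"
  show "\<not> summable f"
  proof
    assume s: "summable f"
    have "eventually (\<lambda>N. suminf f + 1 \<le> (\<Sum>n<N. f n)) sequentially"
      using lim by (simp add: filterlim_at_top)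
    then obtain N where "suminf f + 1 \<le> (\<Sum>n<N. f n)"
      by (meson eventually_sequentially order_refl)
    moreover have "(\<Sum>n<N. f n) \<le> suminf f" using sum_le_suminf[OF s, of "{..<N}"] nn by auto
    ultimately show False by simp
  qed
next
  assume ns: "\<not> summable f"
  show "filterlim (\<lambda>N. \<Sum>n<N. f n) at_top sequentially"
    unfolding filterlim_at_top
  proof
    fix Z :: real
    obtain n where n: "(\<Sum>k\<le>n. f k) > Z"
      using bounded_imp_summable[of f Z] nn ns by (meson not_le)
    show "eventually (\<lambda>N. Z \<le> (\<Sum>n<N. f n)) sequentially"
      unfolding eventually_sequentially
    proof (intro exI allI impI)
      fix N assume "Suc n \<le> N"
      then have "(\<Sum>k\<le>n. f k) \<le> (\<Sum>k<N. f k)"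
        using nn by (intro sum_mono2) auto
      then show "Z \<le> (\<Sum>k<N. f k)" using n by simp
    qed
  qed
qed

lemma cond_iff:
  "conditional_series b \<longleftrightarrow> \<not> summable (\<lambda>n. max (b n) 0) \<and> \<not> summable (\<lambda>n. - min (b n) 0)"
proof -
  have "filterlim (\<lambda>N. \<Sum>n<N. min (b n) 0) at_bot sequentially \<longleftrightarrow>
        filterlim (\<lambda>N. \<Sum>n<N. - min (b n) 0) at_top sequentially"
    by (simp add: filterlim_uminus_at_top sum_negf)
  then show ?thesis unfolding conditional_series_def
    by (subst (asm) L_top) (auto simp: L_top)
qed

lemma sub_summable:
  assumes "infinite X"
  shows "summable (\<lambda>n. h (enumerate X n)) \<longleftrightarrow> summable (\<lambda>i. if i \<in> X then h i else (0::real))"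
proof -
  have "summable (\<lambda>n. (\<lambda>i. if i \<in> X then h i else (0::real)) (enumerate X n)) \<longleftrightarrow> summable (\<lambda>i. if i \<in> X then h i else (0::real))"
    by (rule summable_mono_reindex) (use assms in \<open>auto simp: strict_mono_enumerate range_enumerate\<close>)
  moreover have "(\<lambda>n. (\<lambda>i. if i \<in> X then h i else (0::real)) (enumerate X n)) = (\<lambda>n. h (enumerate X n))"
    using enumerate_in_set[OF assms] by auto
  ultimately show ?thesis by simp
qed

lemma cond_sub_iff:
  assumes "infinite X"
  shows "conditional_series (subseries X a) \<longleftrightarrow>
    \<not> summable (\<lambda>i. if i \<in> X then max (real_of_rat (a i)) 0 else 0) \<and>
    \<not> summable (\<lambda>i. if i \<in> X then - min (real_of_rat (a i)) 0 else 0)"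
  unfolding cond_iff subseries_def
  using sub_summable[OF assms, of "\<lambda>i. max (real_of_rat (a i)) 0"]
    sub_summable[OF assms, of "\<lambda>i. - min (real_of_rat (a i)) 0"] by simp

definition divg :: "(nat \<Rightarrow> real) \<Rightarrow> nat set \<Rightarrow> bool" where
  "divg p S \<longleftrightarrow> \<not> summable (\<lambda>i. if i \<in> S then p i else 0)"

lemma divg_mono:
  assumes nn: "\<And>i. 0 \<le> p i" and "divg p S" "S \<subseteq> T" shows "divg p T"
  unfolding divg_def
proof
  assume "summable (\<lambda>i. if i \<in> T then p i else 0)"
  then have "summable (\<lambda>i. if i \<in> S then p i else 0)"
    by (rule summable_comparison_test[rotated]) (use assms(3) in \<open>auto simp: nn intro!: exI[of _ 0]\<close>)
  then show False using assms(2) unfolding divg_def by simp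
qed

lemma divg_un:
  assumes nn: "\<And>i. 0 \<le> p i" and "divg p (S \<union> T)" shows "divg p S \<or> divg p T"
proof (rule ccontr)
  assume "\<not> (divg p S \<or> divg p T)"
  then have "summable (\<lambda>i. (if i \<in> S then p i else 0) + (if i \<in> T then p i else 0))"
    unfolding divg_def by (auto intro: summable_add)
  then have "summable (\<lambda>i. if i \<in> S \<union> T then p i else 0)"
    by (rule summable_comparison_test[rotated]) (auto simp: nn intro!: exI[of _ 0])
  then show False using assms(2) unfolding divg_def by simp
qed

primrec sq :: "nat set \<Rightarrow> nat set \<Rightarrow> nat \<Rightarrow> nat" where
  "sq U V 0 = (LEAST x. x \<in> U)"
| "sq U V (Suc n) = (LEAST x. x \<in> (if even n then V else U) \<and> sq U V n < x)"

lemma sq_props: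
  assumes U: "infinite U" and V: "infinite V"
  shows "sq U V n \<in> (if even n then U else V) \<and> sq U V n < sq U V (Suc n)"
proof (induction n)
  case 0
  have "\<exists>x. x \<in> U" using U infinite_imp_nonempty by auto
  then have "sq U V 0 \<in> U" by (simp only: sq.simps) (rule LeastI_ex)
  moreover have "\<exists>x. x \<in> V \<and> sq U V 0 < x" using V unfolding infinite_nat_iff_unbounded by blast
  then have "sq U V 0 < sq U V (Suc 0)" by (simp, metis (mono_tags, lifting) LeastI_ex)
  ultimately show ?case by simp
next
  case (Suc n)
  have "\<exists>x. x \<in> (if even n then V else U) \<and> sq U V n < x" using U V unfolding infinite_nat_iff_unbounded by auto
  then have 1: "sq U V (Suc n) \<in> (if even (Suc n) then U else V)"
    by (simp only: sq.simps) (metis (mono_tags, lifting) LeastI_ex even_Suc)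
  have "\<exists>x. x \<in> (if even (Suc n) then V else U) \<and> sq U V (Suc n) < x" using U V unfolding infinite_nat_iff_unbounded by auto
  then have 2: "sq U V (Suc n) < sq U V (Suc (Suc n))"
    by (simp only: sq.simps(2)[of U V "Suc n"]) (metis (mono_tags, lifting) LeastI_ex)
  show ?case using 1 2 by blast
qed

definition rr :: "nat \<Rightarrow> real" where "rr m = 1 / real (m div 2 + 1)"
definition cr :: "nat \<Rightarrow> real" where "cr m = (-1)^m * rr m"

lemma rr_pos: "0 < rr m" by (simp add: rr_def)

lemma rr_lim: "rr \<longlonglongrightarrow> 0"
proof (rule tendsto_sandwich[of "\<lambda>_. 0" _ _ "\<lambda>m. 2 / (real m + 1)"])
  show "\<forall>\<^sub>F n in sequentially. 0 \<le> rr n" using rr_pos by (simp add: less_imp_le)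
  show "\<forall>\<^sub>F n in sequentially. rr n \<le> 2 / (real n + 1)"
  proof (rule always_eventually, rule allI)
    fix n
    have "n + 1 \<le> 2 * (n div 2 + 1::nat)" by presburger
    then have "real (n + 1) \<le> real (2 * (n div 2 + 1))" by (rule of_nat_mono)
    then have "real n + 1 \<le> 2 * real (n div 2 + 1)" by simp
    then show "rr n \<le> 2 / (real n + 1)" unfolding rr_def by (simp add: field_simps)
  qed
  have "(\<lambda>m. 2 * inverse (real (Suc m))) \<longlonglongrightarrow> 2 * 0"
    by (intro tendsto_mult tendsto_const LIMSEQ_inverse_real_of_nat)
  then show "(\<lambda>m. 2 / (real m + 1)) \<longlonglongrightarrow> 0" by (simp add: divide_inverse add.commute)
qed simp

lemma rr_mono: "rr (Suc n) \<le> rr n"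
  unfolding rr_def by (simp add: frac_le div_le_mono)

lemma cr_summable: "summable cr"
  unfolding cr_def using summable_Leibniz'(1)[OF rr_lim] rr_pos rr_mono by (simp add: less_imp_le)

lemma harm: "\<not> summable (\<lambda>k. 1 / real (k + 1))"
proof
  assume "summable (\<lambda>k. 1 / real (k + 1))"
  then have "summable (\<lambda>k. inverse (real (Suc k)))" by (simp add: divide_inverse)
  then have "summable (\<lambda>k. inverse (real k))" by (subst (asm) summable_Suc_iff)
  then show False using not_summable_harmonic by blast
qed

lemma cr_pos_div: "\<not> summable (\<lambda>m. max (cr m) 0)"
proof -
  have "summable (\<lambda>k. max (cr (2*k)) 0) \<longleftrightarrow> summable (\<lambda>m. max (cr m) 0)"
  proof (rule summable_mono_reindex[of "\<lambda>k. 2*k"])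
    show "strict_mono (\<lambda>k. 2*k :: nat)" by (simp add: strict_mono_def)
    fix n assume "n \<notin> range (\<lambda>k. 2*k :: nat)"
    then have "odd n" by auto
    then show "max (cr n) 0 = 0" unfolding cr_def using rr_pos[of n] by simp
  qed
  moreover have "(\<lambda>k. max (cr (2*k)) 0) = (\<lambda>k. 1 / real (k + 1))"
    unfolding cr_def rr_def by auto
  ultimately show ?thesis using harm by simp
qed

lemma cr_neg_div: "\<not> summable (\<lambda>m. - min (cr m) 0)"
proof -
  have "summable (\<lambda>k. - min (cr (2*k+1)) 0) \<longleftrightarrow> summable (\<lambda>m. - min (cr m) 0)"
  proof (rule summable_mono_reindex[of "\<lambda>k. 2*k+1"])
    show "strict_mono (\<lambda>k. 2*k+1 :: nat)" by (simp add: strict_mono_def)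
    fix n assume "n \<notin> range (\<lambda>k. 2*k+1 :: nat)"
    then have "even n"
    proof (rule contrapos_np)
      assume "odd n"
      then obtain k where "n = 2*k+1" by (rule oddE)
      then show "n \<in> range (\<lambda>k. 2*k+1 :: nat)" by blast
    qed
    then show "- min (cr n) 0 = 0" unfolding cr_def using rr_pos[of n] by simp
  qed
  moreover have "(\<lambda>k. - min (cr (2*k+1)) 0) = (\<lambda>k. 1 / real (k + 1))"
    unfolding cr_def rr_def by auto
  ultimately show ?thesis using harm by simp
qed

lemma counter:
  assumes X: "infinite X" and Y: "infinite Y" and U: "infinite (UNIV - X)" and V: "infinite (UNIV - Y)"
  shows "\<exists>a\<in>S_cc. \<not> conditional_series (subseries X a) \<and> \<not> conditional_series (subseries Y a)"
proof -
  define s where "s = sq (UNIV - X) (UNIV - Y)"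
  have sP: "\<And>n. s n \<in> (if even n then UNIV - X else UNIV - Y)" and sS: "\<And>n. s n < s (Suc n)"
    using sq_props[OF U V] unfolding s_def by auto
  have sm: "strict_mono s" using sS by (simp add: strict_mono_Suc_iff)
  have invs: "\<And>m. inv s (s m) = m" using strict_mono_imp_inj_on[OF sm] by (simp add: inv_f_f)
  define a :: "nat \<Rightarrow> rat" where
    "a n = (if n \<in> range s then (-1)^(inv s n) / of_nat (inv s n div 2 + 1) else 0)" for n
  have ar: "real_of_rat (a n) = (if n \<in> range s then cr (inv s n) else 0)" for n
    unfolding a_def cr_def rr_def by (simp add: of_rat_divide of_rat_power of_rat_add)
  have ars: "(\<lambda>m. real_of_rat (a (s m))) = cr" using ar invs by auto
  have ars': "real_of_rat (a (s m)) = cr m" for m by (simp add: ar invs)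
  have reidx: "summable (\<lambda>m. h (real_of_rat (a (s m)))) \<longleftrightarrow> summable (\<lambda>n. h (real_of_rat (a n)))"
    if "h 0 = 0" for h :: "real \<Rightarrow> real"
    by (rule summable_mono_reindex[OF sm]) (simp add: ar that)
  have summ: "summable (\<lambda>n. real_of_rat (a n))"
    using reidx[of "\<lambda>x. x"] ars' cr_summable by simp
  have nn1: "\<not> summable (\<lambda>n. max (real_of_rat (a n)) 0)"
    using reidx[of "\<lambda>x. max x 0"] ars' cr_pos_div by simp
  moreover have nn2: "\<not> summable (\<lambda>n. - min (real_of_rat (a n)) 0)"
    using reidx[of "\<lambda>x. - min x 0"] ars' cr_neg_div by simp
  have aS: "a \<in> S_cc" unfolding S_cc_def mem_Collect_eq cond_iff
    using summ summable_LIMSEQ_zero[OF summ] nn1 nn2 by blast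
  have nX: "real_of_rat (a i) \<le> 0" if "i \<in> X" for i
  proof (cases "i \<in> range s")
    case True
    then obtain m where m: "i = s m" by auto
    then have "odd m" using sP[of m] that by (auto split: if_splits)
    then show ?thesis using ar[of i] m invs[of m] rr_pos[of m] by (simp add: cr_def)
  qed (simp add: ar)
  have nY: "real_of_rat (a i) \<ge> 0" if "i \<in> Y" for i
  proof (cases "i \<in> range s")
    case True
    then obtain m where m: "i = s m" by auto
    then have "even m" using sP[of m] that by (auto split: if_splits)
    then show ?thesis using ar[of i] m invs[of m] rr_pos[of m] by (simp add: cr_def less_imp_le)
  qed (simp add: ar)
  have "(\<lambda>i. if i \<in> X then max (real_of_rat (a i)) 0 else 0) = (\<lambda>i. 0)"
    using nX by (auto simp: max_def)
  then have 1: "\<not> conditional_series (subseries X a)" using cond_sub_iff[OF X] by simp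
  have "(\<lambda>i. if i \<in> Y then - min (real_of_rat (a i)) 0 else 0) = (\<lambda>i. 0)"
  proof (rule ext)
    fix i show "(if i \<in> Y then - min (real_of_rat (a i)) 0 else 0) = 0"
      using min_absorb2[OF nY[of i]] by simp
  qed
  then have 2: "\<not> conditional_series (subseries Y a)" using cond_sub_iff[OF Y] by simp
  show ?thesis using aS 1 2 by blast
qed


lemma res_inf: "r < 3 \<Longrightarrow> infinite {n::nat. n mod 3 = r}"
  unfolding infinite_nat_iff_unbounded
proof (intro allI)
  fix m assume "r < 3"
  then have "(3*m+3+r) mod 3 = r" by presburger
  then show "\<exists>n>m. n \<in> {n. n mod 3 = r}" by (intro exI[of _ "3*m+3+r"]) auto
qed

lemma in_ic:
  assumes "r < 3" "q < 3" "r \<noteq> q"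
  shows "{n::nat. n mod 3 \<noteq> r} \<in> inf_coinf"
proof -
  have "{n::nat. n mod 3 = q} \<subseteq> {n. n mod 3 \<noteq> r}" using assms by auto
  then have "infinite {n::nat. n mod 3 \<noteq> r}" using res_inf[OF assms(2)] finite_subset by blast
  moreover have "UNIV - {n::nat. n mod 3 \<noteq> r} = {n. n mod 3 = r}" by auto
  ultimately show ?thesis unfolding inf_coinf_def using res_inf[OF assms(1)] by auto
qed

lemma upper: "ss_n_family {{n::nat. n mod 3 \<noteq> 2}, {n. n mod 3 \<noteq> 0}, {n. n mod 3 \<noteq> 1}}"
  unfolding ss_n_family_def
proof (intro conjI ballI)
  define X1 where "X1 = {n::nat. n mod 3 \<noteq> 2}"
  define X2 where "X2 = {n::nat. n mod 3 \<noteq> 0}"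
  define X3 where "X3 = {n::nat. n mod 3 \<noteq> 1}"
  have ic1: "X1 \<in> inf_coinf" unfolding X1_def by (rule in_ic[of 2 0]) simp_all
  have ic2: "X2 \<in> inf_coinf" unfolding X2_def by (rule in_ic[of 0 1]) simp_all
  have ic3: "X3 \<in> inf_coinf" unfolding X3_def by (rule in_ic[of 1 0]) simp_all
  note ic = ic1 ic2 ic3
  then show "{{n::nat. n mod 3 \<noteq> 2}, {n. n mod 3 \<noteq> 0}, {n. n mod 3 \<noteq> 1}} \<subseteq> inf_coinf"
    unfolding X1_def X2_def X3_def by auto
  fix a assume "a \<in> S_cc"
  then have c: "conditional_series (\<lambda>n. real_of_rat (a n))" unfolding S_cc_def by auto
  define p where "p i = max (real_of_rat (a i)) 0" for i
  define q where "q i = - min (real_of_rat (a i)) 0" for i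
  have pn: "\<And>i. 0 \<le> p i" and qn: "\<And>i. 0 \<le> q i" unfolding p_def q_def by auto
  define A where "A = {n::nat. n mod 3 = 0}"
  define B where "B = {n::nat. n mod 3 = 1}"
  define C where "C = {n::nat. n mod 3 = 2}"
  have U: "UNIV = A \<union> (B \<union> C)" unfolding A_def B_def C_def by auto
  have "divg p UNIV" "divg q UNIV" using c unfolding cond_iff divg_def p_def q_def by auto
  then have dp: "divg p A \<or> divg p B \<or> divg p C" and dq: "divg q A \<or> divg q B \<or> divg q C"
    unfolding U using divg_un pn qn by metis+
  have cov: "\<exists>X\<in>{X1,X2,X3}. D \<subseteq> X \<and> E \<subseteq> X" if "D \<in> {A,B,C}" "E \<in> {A,B,C}" for D E
    using that unfolding A_def B_def C_def X1_def X2_def X3_def by auto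
  obtain D E where D: "D \<in> {A,B,C}" "divg p D" and E: "E \<in> {A,B,C}" "divg q E"
    using dp dq by blast
  obtain X where X: "X \<in> {X1,X2,X3}" "D \<subseteq> X" "E \<subseteq> X" using cov[OF D(1) E(1)] by blast
  have "divg p X" "divg q X" using divg_mono[OF pn D(2) X(2)] divg_mono[OF qn E(2) X(3)] .
  moreover have "infinite X" using X(1) ic unfolding inf_coinf_def by auto
  ultimately have "conditional_series (subseries X a)"
    using cond_sub_iff unfolding divg_def p_def q_def by blast
  then show "\<exists>X\<in>{{n::nat. n mod 3 \<noteq> 2}, {n. n mod 3 \<noteq> 0}, {n. n mod 3 \<noteq> 1}}. conditional_series (subseries X a)"
    using X(1) unfolding X1_def X2_def X3_def by blast
qed

lemma card3: "card {{n::nat. n mod 3 \<noteq> 2}, {n. n mod 3 \<noteq> 0}, {n. n mod 3 \<noteq> 1}} = 3"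
proof -
  have "{n::nat. n mod 3 \<noteq> 2} \<noteq> {n. n mod 3 \<noteq> 0}" by (metis (mono_tags) mem_Collect_eq mod_self zero_neq_numeral mod_0)
  moreover have "{n::nat. n mod 3 \<noteq> 2} \<noteq> {n. n mod 3 \<noteq> 1}"
  proof
    assume "{n::nat. n mod 3 \<noteq> 2} = {n. n mod 3 \<noteq> 1}"
    then have "(1::nat) \<in> {n::nat. n mod 3 \<noteq> 2} \<longleftrightarrow> (1::nat) \<in> {n. n mod 3 \<noteq> 1}" by simp
    then show False by simp
  qed
  moreover have "{n::nat. n mod 3 \<noteq> 0} \<noteq> {n. n mod 3 \<noteq> 1}"
  proof
    assume "{n::nat. n mod 3 \<noteq> 0} = {n. n mod 3 \<noteq> 1}"
    then have "(1::nat) \<in> {n::nat. n mod 3 \<noteq> 0} \<longleftrightarrow> (1::nat) \<in> {n. n mod 3 \<noteq> 1}" by simp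
    then show False by simp
  qed
  ultimately show ?thesis by simp
qed

lemma small_cover:
  assumes "finite F" "card F \<le> 2" "F \<noteq> {}"
  shows "\<exists>X\<in>F. \<exists>Y\<in>F. F \<subseteq> {X, Y}"
proof -
  have "card F = 1 \<or> card F = 2" using assms card_0_eq by fastforce
  then show ?thesis
  proof
    assume "card F = 1" then obtain X where "F = {X}" by (rule card_1_singletonE)
    then show ?thesis by auto
  next
    assume "card F = 2" then obtain X Y where "F = {X, Y}" by (auto simp: card_2_iff)
    then show ?thesis by auto
  qed
qed

theorem mainTheorem14:
  shows "(\<exists>F. ss_n_family F \<and> finite F \<and> card F = 3) \<and>
         (\<forall>F. ss_n_family F \<longrightarrow> infinite F \<or> card F \<ge> 3)"
proof
  show "\<exists>F. ss_n_family F \<and> finite F \<and> card F = 3"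
    using upper card3 by (intro exI[of _ "{{n::nat. n mod 3 \<noteq> 2}, {n. n mod 3 \<noteq> 0}, {n. n mod 3 \<noteq> 1}}"]) auto
  show "\<forall>F. ss_n_family F \<longrightarrow> infinite F \<or> card F \<ge> 3"
  proof (intro allI impI)
    fix F assume fam: "ss_n_family F"
    show "infinite F \<or> card F \<ge> 3"
    proof (rule ccontr)
      assume "\<not> (infinite F \<or> card F \<ge> 3)"
      then have fin: "finite F" and c2: "card F \<le> 2" by auto
      have A0: "{n::nat. n mod 3 \<noteq> 2} \<in> inf_coinf" by (rule in_ic[of _ 0]) auto
      obtain X Y where XY: "X \<in> inf_coinf" "Y \<in> inf_coinf" "F \<subseteq> {X, Y}"
      proof (cases "F = {}")
        case True then show ?thesis using that A0 by blast
      next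
        case False then show ?thesis using that small_cover[OF fin c2] fam
          unfolding ss_n_family_def by blast
      qed
      obtain a where a: "a \<in> S_cc" "\<not> conditional_series (subseries X a)" "\<not> conditional_series (subseries Y a)"
        using counter XY(1,2) unfolding inf_coinf_def by blast
      then obtain Z where "Z \<in> F" "conditional_series (subseries Z a)"
        using fam unfolding ss_n_family_def by blast
      then show False using XY(3) a by auto
    qed
  qed
qed

end
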